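(* Let $q$ be a prime power, let $k\geq 2$ and $r>4$ be integers, let $n=rk$, and let $e=\lceil r/4\rceil-1$. Let $\gamma\in\mathbb{F}_{q^n}$ be a root of an irreducible polynomial of degree $r$ over $\mathbb{F}_{q^k}$. For every $\delta\in\mathbb{F}_{q^k}$ and every integer $l$ with $2\leq l\leq e+1$, the $\mathbb{F}_q$-subspace $$U_{\delta,l}=\{a+u\gamma+(u^q+\delta u)\gamma^{l}\mid a\in\mathbb{F}_q,\ u\in\mathbb{F}_{q^k}\}$$ of $\mathbb{F}_{q^n}$ is a Sidon space.
   Context: An $\mathbb{F}_q$-subspace $U$ of $\mathbb{F}_{q^n}$ is a Sidon space if for all nonzero $a,b,c,d\in U$, $ab=cd$ implies $\{a\mathbb{F}_q,b\mathbb{F}_q\}=\{c\mathbb{F}_q,d\mathbb{F}_q\}$. *)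

theory Defs
  imports "HOL-Library.Cardinality" "HOL-Computational_Algebra.Polynomial" "HOL-Computational_Algebra.Primes"
begin

text \<open>Inside a finite field 'a with q^n elements, the subfield F_{q^m} (for m dividing n)
  is the set of roots of X^(q^m) - X.\<close>
definition subfield_of_order :: "nat \<Rightarrow> 'a::field set" where
  "subfield_of_order Q = {x. x ^ Q = x}"

definition is_subspace_over :: "'a::field set \<Rightarrow> 'a set \<Rightarrow> bool" where
  "is_subspace_over F U \<longleftrightarrow> 0 \<in> U \<and> (\<forall>x\<in>U. \<forall>y\<in>U. x + y \<in> U) \<and> (\<forall>c\<in>F. \<forall>x\<in>U. c * x \<in> U)"

definition sidon_space :: "'a::field set \<Rightarrow> 'a set \<Rightarrow> bool" where
  "sidon_space F U \<longleftrightarrow> is_subspace_over F U \<and>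
     (\<forall>a\<in>U. \<forall>b\<in>U. \<forall>c\<in>U. \<forall>d\<in>U. a \<noteq> 0 \<longrightarrow> b \<noteq> 0 \<longrightarrow> c \<noteq> 0 \<longrightarrow> d \<noteq> 0 \<longrightarrow>
        a * b = c * d \<longrightarrow> {(\<lambda>x. a * x) ` F, (\<lambda>x. b * x) ` F} = {(\<lambda>x. c * x) ` F, (\<lambda>x. d * x) ` F})"

definition irreducible_over :: "'a::field set \<Rightarrow> 'a poly \<Rightarrow> bool" where
  "irreducible_over K p \<longleftrightarrow> (\<forall>i. coeff p i \<in> K) \<and> degree p \<ge> 1 \<and>
     (\<forall>f g. (\<forall>i. coeff f i \<in> K) \<longrightarrow> (\<forall>i. coeff g i \<in> K) \<longrightarrow> p = f * g \<longrightarrow>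
        degree f = 0 \<or> degree g = 0)"

end

theory Submission
  imports Defs
begin



definition rel :: "'a::field set \<Rightarrow> 'a \<Rightarrow> 'a \<Rightarrow> 'a \<Rightarrow> 'a \<Rightarrow> bool" where
  "rel F X Y X' Y' \<longleftrightarrow> (\<exists>t\<in>F. t \<noteq> 0 \<and> ((X = t*X' \<and> Y' = t*Y) \<or> (X = t*Y' \<and> X' = t*Y)))"

lemma rel_swap2: "rel F X Y X' Y' \<Longrightarrow> rel F X Y Y' X'"
  unfolding rel_def by blast

lemma relI1: "t \<in> F \<Longrightarrow> t \<noteq> 0 \<Longrightarrow> X = t*X' \<Longrightarrow> Y' = t*Y \<Longrightarrow> rel F X Y X' Y'"
  unfolding rel_def by blast
lemma relI2: "t \<in> F \<Longrightarrow> t \<noteq> 0 \<Longrightarrow> X = t*Y' \<Longrightarrow> X' = t*Y \<Longrightarrow> rel F X Y X' Y'"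
  unfolding rel_def by blast

lemma rel_swap1:
  assumes inv: "\<And>x. x \<in> F \<Longrightarrow> inverse x \<in> F" and "rel F X Y X' Y'"
  shows "rel F Y X X' Y'"
proof -
  obtain t where t: "t\<in>F" "t\<noteq>0" "(X = t*X' \<and> Y' = t*Y) \<or> (X = t*Y' \<and> X' = t*Y)"
    using assms(2) unfolding rel_def by blast
  have i: "inverse t \<in> F" "inverse t \<noteq> 0" using inv t(1,2) by auto
  show ?thesis
  proof (cases "X = t*X' \<and> Y' = t*Y")
    case True
    then have "Y = inverse t * Y'" "X' = inverse t * X" using t(2) by auto
    then show ?thesis using relI2[OF i] by blast
  next
    case False
    then have "X = t*Y' \<and> X' = t*Y" using t(3) by blast
    then have "Y = inverse t * X'" "Y' = inverse t * X" using t(2) by auto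
    then show ?thesis using relI1[OF i] by blast
  qed
qed

locale fq =
  fixes F :: "'a::field set" and q :: nat
  assumes hF: "\<And>x. x \<in> F \<longleftrightarrow> x^q = x" and q1: "q \<ge> 1"
    and hsub: "\<And>x y. x\<in>F \<Longrightarrow> y\<in>F \<Longrightarrow> x - y \<in> F"
begin

lemma Fpow: "x\<in>F \<Longrightarrow> x^q = x" using hF by blast
lemma FI: "x^q = x \<Longrightarrow> x\<in>F" using hF by blast
lemma mulF: "x\<in>F \<Longrightarrow> y\<in>F \<Longrightarrow> x*y \<in> F"
  by (rule FI) (simp add: power_mult_distrib Fpow)
lemma divF: "x\<in>F \<Longrightarrow> y\<in>F \<Longrightarrow> x/y \<in> F"
  by (rule FI) (simp add: power_divide Fpow)
lemma invF: "x\<in>F \<Longrightarrow> inverse x \<in> F"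
  by (rule FI) (simp add: power_inverse Fpow)
lemma zero_pow: "(0::'a)^q = 0" using q1 by simp
lemma zeroF: "0 \<in> F" by (rule FI) (simp add: zero_pow)
lemma oneF: "1 \<in> F" by (rule FI) simp
lemma negF: "x\<in>F \<Longrightarrow> -x \<in> F" using hsub[OF zeroF, of x] by simp

lemma phi_scale: assumes "t \<in> F" shows "(t*v)^q + d*(t*v) = t*(v^q + d*v)"
proof -
  have "t^q = t" using Fpow assms by blast
  then show ?thesis by (simp add: power_mult_distrib algebra_simps)
qed

lemma W_scale: assumes "t \<in> F" shows "t*b + (t*v)*g + ((t*v)^q + d*(t*v))*G = t * (b + v*g + (v^q+d*v)*G)"
  unfolding phi_scale[OF assms] by (simp add: algebra_simps)

lemma relsw1: "rel F Y X X' Y' \<Longrightarrow> rel F X Y X' Y'"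
  by (rule rel_swap1[of F], rule invF)

lemma L1:
  assumes F: "a\<in>F" "b\<in>F" "a'\<in>F" "b'\<in>F"
    and E0: "a*b = a'*b'" and E1: "a*v+b*u = a'*v'+b'*u'"
    and u: "u = 0" "u' = 0"
    and nz: "a + u*g + (u^q+d*u)*G \<noteq> 0" "a' + u'*g + (u'^q+d*u')*G \<noteq> 0"
  shows "rel F (a + u*g + (u^q+d*u)*G) (b + v*g + (v^q+d*v)*G)
               (a' + u'*g + (u'^q+d*u')*G) (b' + v'*g + (v'^q+d*v')*G)"
proof -
  have a0: "a \<noteq> 0" "a' \<noteq> 0" using nz by (simp_all add: u zero_pow)
  define t where "t = a/a'"
  have tF: "t \<in> F" "t \<noteq> 0" using divF F a0 by (auto simp: t_def)
  have "a*v = a'*v'" using E1 by (simp add: u)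
  then have v': "v' = t*v" using a0 by (simp add: t_def field_simps)
  have b': "b' = t*b" using E0 a0 by (simp add: t_def field_simps)
  have X: "a + u*g + (u^q+d*u)*G = t * (a' + u'*g + (u'^q+d*u')*G)"
    using a0 by (simp add: t_def u zero_pow)
  have Y: "b' + v'*g + (v'^q+d*v')*G = t * (b + v*g + (v^q+d*v)*G)"
    unfolding v' b' by (rule W_scale[OF tF(1)])
  show ?thesis by (rule relI1[OF tF X Y])
qed


lemma L2:
  assumes F: "a\<in>F" "b\<in>F" "a'\<in>F" "b'\<in>F"
    and E0: "a*b = a'*b'" and E1: "a*v+b*u = a'*v'+b'*u'" and E2: "u*v = u'*v'"
    and nz: "u \<noteq> 0" "v \<noteq> 0" "u' \<noteq> 0" "v' \<noteq> 0"
    and U: "u^(q-1) = u'^(q-1)"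
  shows "rel F (a + u*g + (u^q+d*u)*G) (b + v*g + (v^q+d*v)*G)
               (a' + u'*g + (u'^q+d*u')*G) (b' + v'*g + (v'^q+d*v')*G)"
proof -
  define t where "t = u/u'"
  have qs: "q = Suc (q-1)" using q1 by simp
  have t1: "t^(q-1) = 1" using U nz by (simp add: t_def power_divide)
  have "t^q = t * t^(q-1)" by (subst qs) simp
  then have "t^q = t" using t1 by simp
  then have tF: "t \<in> F" "t \<noteq> 0" using FI nz by (auto simp: t_def)
  have u: "u = t*u'" using nz by (simp add: t_def)
  have "t*u'*v = u'*v'" using E2 u by simp
  then have v': "v' = t*v" using nz by (simp add: algebra_simps)
  define \<alpha> where "\<alpha> = a - t*a'"
  define \<beta> where "\<beta> = t*b - b'"
  have \<alpha>F: "\<alpha> \<in> F" unfolding \<alpha>_def using hsub mulF F tF by blast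
  have \<beta>F: "\<beta> \<in> F" unfolding \<beta>_def using hsub mulF F tF by blast
  have a: "a = t*a' + \<alpha>" by (simp add: \<alpha>_def)
  have b': "b' = t*b - \<beta>" by (simp add: \<beta>_def)
  have lin: "\<alpha>*v + \<beta>*u' = 0"
  proof -
    have "\<alpha>*v + \<beta>*u' = (a*v + b*u) - (a'*v' + b'*u')"
      unfolding \<alpha>_def \<beta>_def u v' by (simp add: algebra_simps)
    then show ?thesis using E1 by simp
  qed
  show ?thesis
  proof (cases "\<alpha> = 0")
    case True
    then have "\<beta> = 0" using lin nz by simp
    then have a2: "a = t*a'" and b2: "b' = t*b" using True a b' by simp_all
    have X: "a + u*g + (u^q+d*u)*G = t * (a' + u'*g + (u'^q+d*u')*G)"
      unfolding a2 u by (rule W_scale[OF tF(1)])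
    have Y: "b' + v'*g + (v'^q+d*v')*G = t * (b + v*g + (v^q+d*v)*G)"
      unfolding b2 v' by (rule W_scale[OF tF(1)])
    show ?thesis by (rule relI1[OF tF X Y])
  next
    case False
    define c where "c = - \<beta> / \<alpha>"
    have cF: "c \<in> F" unfolding c_def using divF negF \<beta>F \<alpha>F by blast
    have "\<alpha>*v = - (\<beta>*u')" using lin by (simp add: eq_neg_iff_add_eq_0)
    then have v: "v = c*u'" using False by (simp add: c_def field_simps)
    have c0: "c \<noteq> 0" using v nz by auto
    have \<beta>: "\<beta> = - c*\<alpha>" using False by (simp add: c_def)
    have "(t*a' + \<alpha>)*b = a'*(t*b + c*\<alpha>)" using E0 a b' \<beta> by simp
    then have "\<alpha> * b = \<alpha> * (c*a')" by (simp add: algebra_simps)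
    then have b: "b = c*a'" using False by simp
    have Y: "b + v*g + (v^q+d*v)*G = c * (a' + u'*g + (u'^q+d*u')*G)"
      unfolding b v by (rule W_scale[OF cF])
    have b'2: "b' = c*a" using b' \<beta> b a by (simp add: algebra_simps)
    have v'2: "v' = c*u" using v' v u by (simp add: algebra_simps)
    have Y': "b' + v'*g + (v'^q+d*v')*G = c * (a + u*g + (u^q+d*u)*G)"
      unfolding b'2 v'2 by (rule W_scale[OF cF])
    have ic: "inverse c \<in> F" "inverse c \<noteq> 0" using invF cF c0 by auto
    show ?thesis
      by (rule relI2[OF ic]) (simp_all add: Y Y' c0)
  qed
qed


lemma core:
  assumes F: "a\<in>F" "b\<in>F" "a'\<in>F" "b'\<in>F"
    and E0: "a*b = a'*b'" and E1: "a*v+b*u = a'*v'+b'*u'" and E2: "u*v = u'*v'"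
    and E3: "u*v^q + u^q*v = u'*v'^q + u'^q*v'"
    and nz: "a + u*g + (u^q+d*u)*G \<noteq> 0" "b + v*g + (v^q+d*v)*G \<noteq> 0"
      "a' + u'*g + (u'^q+d*u')*G \<noteq> 0" "b' + v'*g + (v'^q+d*v')*G \<noteq> 0"
  shows "rel F (a + u*g + (u^q+d*u)*G) (b + v*g + (v^q+d*v)*G)
               (a' + u'*g + (u'^q+d*u')*G) (b' + v'*g + (v'^q+d*v')*G)"
proof (cases "u*v = 0")
  case True
  then have uv: "u = 0 \<or> v = 0" "u' = 0 \<or> v' = 0" using E2 by auto
  have E0': "b*a = b'*a'" "a*b = b'*a'" "b*a = a'*b'" using E0 by (simp_all add: mult.commute)
  have E1': "b*u+a*v = b'*u'+a'*v'" "a*v+b*u = b'*u'+a'*v'" "b*u+a*v = a'*v'+b'*u'" using E1 by (simp_all add: add.commute)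
  show ?thesis
  proof (cases "u = 0")
    case u0: True
    show ?thesis
    proof (cases "u' = 0")
      case True
      show ?thesis by (rule L1[OF F E0 E1 u0 True nz(1,3)])
    next
      case False
      then have "v' = 0" using uv by simp
      from L1[OF F(1,2,4,3) E0'(2) E1'(2) u0 this nz(1,4)] show ?thesis by (rule rel_swap2)
    qed
  next
    case u0: False
    then have v0: "v = 0" using uv by simp
    show ?thesis
    proof (cases "u' = 0")
      case True
      from L1[OF F(2,1,3,4) E0'(3) E1'(3) v0 True nz(2,3)] show ?thesis by (rule relsw1)
    next
      case False
      then have "v' = 0" using uv by simp
      show ?thesis by (rule relsw1[OF rel_swap2[OF L1[OF F(2,1,4,3) E0'(1) E1'(1) v0 \<open>v' = 0\<close> nz(2,4)]]])
    qed
  qed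
next
  case False
  then have nz0: "u \<noteq> 0" "v \<noteq> 0" "u' \<noteq> 0" "v' \<noteq> 0" using E2 by auto
  define Q where "Q = q - 1"
  have qs: "q = Suc Q" using q1 by (simp add: Q_def)
  have "u*v*(u^Q + v^Q) = u'*v'*(u'^Q + v'^Q)"
    using E3 unfolding qs by (simp add: algebra_simps)
  then have S: "u^Q + v^Q = u'^Q + v'^Q" using E2 False by simp
  have P: "u^Q * v^Q = u'^Q * v'^Q"
    by (simp add: E2 flip: power_mult_distrib)
  have "(u^Q - u'^Q) * (u^Q - v'^Q) = u^Q*u^Q - u^Q*(u'^Q + v'^Q) + u'^Q * v'^Q"
    by (simp add: algebra_simps)
  also have "\<dots> = 0" unfolding S[symmetric] P[symmetric] by (simp add: algebra_simps)
  finally have "u^Q = u'^Q \<or> u^Q = v'^Q" by simp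
  then show ?thesis
  proof
    assume "u^Q = u'^Q"
    then have "u^(q-1) = u'^(q-1)" by (simp add: Q_def)
    from L2[OF F E0 E1 E2 nz0 this] show ?thesis .
  next
    assume "u^Q = v'^Q"
    then have "u^(q-1) = v'^(q-1)" by (simp add: Q_def)
    have E': "a*b = b'*a'" "a*v+b*u = b'*u'+a'*v'" "u*v = v'*u'"
      using E0 E1 E2 by (simp_all add: mult.commute add.commute)
    show ?thesis by (rule rel_swap2[OF L2[OF F(1,2,4,3) E' nz0(1,2,4,3) \<open>u^(q-1) = v'^(q-1)\<close>]])
  qed
qed

end



definition kp :: "'a::field set \<Rightarrow> 'a poly \<Rightarrow> bool" where
  "kp K f \<longleftrightarrow> (\<forall>i. coeff f i \<in> K)"

locale subf =
  fixes K :: "'a::field set"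
  assumes z: "0 \<in> K"
    and ad: "\<And>x y. x\<in>K \<Longrightarrow> y\<in>K \<Longrightarrow> x+y \<in> K"
    and sb: "\<And>x y. x\<in>K \<Longrightarrow> y\<in>K \<Longrightarrow> x-y \<in> K"
    and ml: "\<And>x y. x\<in>K \<Longrightarrow> y\<in>K \<Longrightarrow> x*y \<in> K"
    and dv: "\<And>x y. x\<in>K \<Longrightarrow> y\<in>K \<Longrightarrow> x/y \<in> K"
begin

lemma kp0: "kp K 0" by (simp add: kp_def z)

lemma kp_monom: "c \<in> K \<Longrightarrow> kp K (monom c d)" by (simp add: kp_def z)

lemma kp_add: "kp K f \<Longrightarrow> kp K g \<Longrightarrow> kp K (f + g)" by (simp add: kp_def ad)
lemma kp_diff: "kp K f \<Longrightarrow> kp K g \<Longrightarrow> kp K (f - g)" by (simp add: kp_def sb)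
lemma kp_monom_mult: "c \<in> K \<Longrightarrow> kp K g \<Longrightarrow> kp K (monom c d * g)"
  by (simp add: kp_def coeff_monom_mult z ml)

lemma kdiv:
  assumes g: "kp K g" "g \<noteq> 0"
  shows "kp K f \<Longrightarrow> \<exists>s t. kp K s \<and> kp K t \<and> f = s*g + t \<and> (t = 0 \<or> degree t < degree g)"
proof (induction "degree f" arbitrary: f rule: less_induct)
  case less
  show ?case
  proof (cases "f = 0 \<or> degree f < degree g")
    case True
    then show ?thesis using less.prems kp0 by (intro exI[of _ 0] exI[of _ f]) auto
  next
    case False
    then have f0: "f \<noteq> 0" and dg: "degree g \<le> degree f" by auto
    define c where "c = lead_coeff f / lead_coeff g"
    define d where "d = degree f - degree g"
    define h where "h = monom c d * g"
    have cK: "c \<in> K" unfolding c_def using dv less.prems g(1) by (simp add: kp_def)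
    have kh: "kp K h" unfolding h_def by (rule kp_monom_mult[OF cK g(1)])
    have kf': "kp K (f - h)" by (rule kp_diff[OF less.prems kh])
    have hi: "coeff (f - h) i = 0" if "i \<ge> degree f" for i
    proof (cases "i = degree f")
      case True
      have "coeff h i = c * lead_coeff g" unfolding h_def coeff_monom_mult using True dg
        by (simp add: d_def)
      also have "\<dots> = lead_coeff f" using g(2) by (simp add: c_def)
      finally show ?thesis using True by simp
    next
      case False
      then have i: "i > degree f" using that by simp
      then have "coeff f i = 0" by (simp add: coeff_eq_0)
      moreover have "coeff h i = 0" unfolding h_def coeff_monom_mult using i dg
        by (simp add: d_def coeff_eq_0)
      ultimately show ?thesis by simp
    qed
    show ?thesis
    proof (cases "f - h = 0")
      case True
      then have "f = monom c d * g + 0" by (simp add: h_def)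
      then show ?thesis using kp_monom[OF cK] kp0 by blast
    next
      case False
      have "degree f \<noteq> 0"
      proof
        assume "degree f = 0"
        then have "coeff (f - h) i = 0" for i using hi by simp
        then show False using False by (simp add: poly_eq_iff)
      qed
      then have "degree (f - h) \<le> degree f - 1"
      proof (intro degree_le allI impI)
        fix i assume "degree f - 1 < i"
        then have "i \<ge> degree f" by simp
        then show "coeff (f - h) i = 0" by (rule hi)
      qed
      then have "degree (f - h) < degree f" using \<open>degree f \<noteq> 0\<close> by simp
      from less.hyps[OF this kf'] obtain s t where st: "kp K s" "kp K t" "f - h = s*g + t"
        "t = 0 \<or> degree t < degree g" by blast
      have "f = (s + monom c d) * g + t" using st(3) by (simp add: h_def algebra_simps)
      then show ?thesis using st kp_add[OF st(1) kp_monom[OF cK]] by blast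
    qed
  qed
qed

lemma indep:
  assumes irr: "irreducible_over K P" and dP: "degree P = r" and root: "poly P \<gamma> = 0"
    and cK: "\<And>i. i < r \<Longrightarrow> c i \<in> K"
    and s0: "(\<Sum>i<r. c i * \<gamma>^i) = 0"
    and j: "j < r"
  shows "c j = 0"
proof (rule ccontr)
  assume cj: "c j \<noteq> 0"
  define Qc where "Qc = (\<Sum>i<r. monom (c i) i)"
  have cQ: "coeff Qc n = (if n < r then c n else 0)" for n
  proof -
    have "coeff Qc n = (\<Sum>i\<in>{..<r}. if i = n then c i else 0)"
      unfolding Qc_def coeff_sum coeff_monom by (simp only: eq_commute)
    also have "\<dots> = (if n < r then c n else 0)" by (subst sum.delta) simp_all
    finally show ?thesis .
  qed
  have kQ: "kp K Qc" unfolding kp_def cQ using cK z by simp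
  have pQ: "poly Qc \<gamma> = 0" unfolding Qc_def poly_sum poly_monom using s0 by simp
  have Q0: "Qc \<noteq> 0" using cQ[of j] j cj by auto
  have r0: "r > 0" using j by simp
  have dQ: "degree Qc < r"
  proof -
    have "degree Qc \<le> r - 1" by (intro degree_le) (auto simp: cQ)
    then show ?thesis using r0 by simp
  qed
  define S where "S = {Q. kp K Q \<and> Q \<noteq> 0 \<and> poly Q \<gamma> = 0}"
  have QcS: "Qc \<in> S" using kQ pQ Q0 by (simp add: S_def)
  define d where "d = (LEAST d. \<exists>Q\<in>S. degree Q = d)"
  have ex: "\<exists>d. \<exists>Q\<in>S. degree Q = d" using QcS by blast
  have d: "\<exists>Q\<in>S. degree Q = d" unfolding d_def by (rule LeastI_ex[OF ex])
  have dmin: "\<not>(\<exists>Q\<in>S. degree Q = d')" if "d' < d" for d'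
    using not_less_Least[of d' "\<lambda>d. \<exists>Q\<in>S. degree Q = d"] that unfolding d_def by blast
  obtain Q0 where Q0S: "Q0 \<in> S" and dQ0: "degree Q0 = d" using d by blast
  have dle: "d \<le> degree Qc"
  proof (rule ccontr)
    assume "\<not> d \<le> degree Qc"
    then have "degree Qc < d" by simp
    from dmin[OF this] QcS show False by blast
  qed
  have kQ0: "kp K Q0" and nQ0: "Q0 \<noteq> 0" and pQ0: "poly Q0 \<gamma> = 0" using Q0S by (auto simp: S_def)
  have kP: "kp K P" using irr unfolding irreducible_over_def kp_def by blast
  obtain s t where st: "kp K s" "kp K t" "P = s*Q0 + t" "t = 0 \<or> degree t < degree Q0"
    using kdiv[OF kQ0 nQ0 kP] by blast
  have "poly P \<gamma> = poly s \<gamma> * poly Q0 \<gamma> + poly t \<gamma>" using st(3) by simp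
  then have pt: "poly t \<gamma> = 0" using root pQ0 by simp
  have t0: "t = 0"
  proof (rule ccontr)
    assume "t \<noteq> 0"
    then have "t \<in> S" using st(2) pt by (simp add: S_def)
    moreover have "degree t < d" using st(4) \<open>t \<noteq> 0\<close> dQ0 by simp
    ultimately show False using dmin by blast
  qed
  have P: "P = s * Q0" using st(3) t0 by simp
  have H: "\<forall>f g. (\<forall>i. coeff f i \<in> K) \<longrightarrow> (\<forall>i. coeff g i \<in> K) \<longrightarrow> P = f * g \<longrightarrow>
        degree f = 0 \<or> degree g = 0" using irr unfolding irreducible_over_def by (elim conjE)
  have irr3: "degree f = 0 \<or> degree g = 0" if "kp K f" "kp K g" "P = f * g" for f g
    by (rule H[rule_format]) (use that in \<open>simp_all add: kp_def\<close>)
  have "degree s = 0 \<or> degree Q0 = 0" by (rule irr3[OF st(1) kQ0 P])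
  moreover have "degree Q0 \<noteq> 0"
  proof
    assume "degree Q0 = 0"
    then obtain a where "Q0 = [:a:]" by (meson degree_eq_zeroE)
    then show False using nQ0 pQ0 by simp
  qed
  ultimately have "degree s = 0" by simp
  have "degree P \<ge> 1" using irr unfolding irreducible_over_def by blast
  then have P0: "P \<noteq> 0" by auto
  then have "s \<noteq> 0" using P by auto
  then have "degree P = degree Q0" using P nQ0 \<open>degree s = 0\<close> by (simp add: degree_mult_eq)
  then show False using dP dQ0 dle dQ by simp
qed

end



lemma card_zero: "of_nat CARD('a) = (0::'a::{comm_ring_1,finite})"
proof -
  have "(\<Sum>x\<in>UNIV. x + 1) = (\<Sum>x\<in>(UNIV::'a set). x)"
    by (rule sum.reindex_bij_witness[of _ "\<lambda>x. x - 1" "\<lambda>x. x + 1"]) auto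
  then show ?thesis by (simp add: sum.distrib)
qed

lemma charp:
  assumes "prime p" "CARD('a::{field,finite}) = p^N"
  shows "CHAR('a) = p"
proof -
  have d: "CHAR('a) dvd p^N" using card_zero[where 'a='a] of_nat_eq_0_iff_char_dvd assms(2) by metis
  have pc: "prime CHAR('a)" by (rule prime_CHAR_semidom[OF finite_imp_CHAR_pos]) simp
  have "CHAR('a) dvd p" by (rule prime_dvd_power[OF pc d])
  then show ?thesis using primes_dvd_imp_eq pc assms(1) by blast
qed

lemma frob:
  assumes "CHAR('a::field) = p" "prime p" "Q = p^e"
  shows "(x+y::'a)^Q = x^Q + y^Q"
  by (rule freshmans_dream'[of Q e]) (use assms in simp_all)

lemma frob_sub:
  assumes "CHAR('a::field) = p" "prime p" "Q = p^e"
  shows "(x-y::'a)^Q = x^Q - y^Q"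
proof -
  have "x^Q = ((x-y)+y)^Q" by simp
  also have "\<dots> = (x-y)^Q + y^Q" by (rule frob[OF assms])
  finally show ?thesis by simp
qed

lemma sum_delta_pow:
  assumes "j < r"
  shows "(\<Sum>i<r. (if i = j then w else 0) * (g::'a::field)^i) = w * g^j"
proof -
  have "(\<Sum>i<r. (if i = j then w else 0) * g^i) = (\<Sum>i<r. if i = j then w * g^j else 0)"
    by (rule sum.cong) auto
  also have "\<dots> = w * g^j" using assms by (subst sum.delta) simp_all
  finally show ?thesis .
qed

definition CC :: "nat \<Rightarrow> 'a::field \<Rightarrow> 'a \<Rightarrow> 'a \<Rightarrow> 'a \<Rightarrow> 'a \<Rightarrow> 'a \<Rightarrow> nat \<Rightarrow> 'a" where
  "CC l a u A b v B i = (if i = 0 then a*b else 0) + (if i = 1 then a*v+b*u else 0)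
     + (if i = 2 then u*v else 0) + (if i = l then a*B+b*A else 0)
     + (if i = l+1 then u*B+v*A else 0) + (if i = 2*l then A*B else 0)"

lemma expand:
  assumes "2*l < r" "l \<ge> 2"
  shows "(a + u*g + A*g^l) * (b + v*g + B*g^l) = (\<Sum>i<r. CC l a u A b v B i * g^i)"
proof -
  have r: "0 < r" "1 < r" "2 < r" "l < r" "l+1 < r" using assms by auto
  have "(\<Sum>i<r. CC l a u A b v B i * g^i) =
     (\<Sum>i<r. (if i = 0 then a*b else 0) * g^i) + (\<Sum>i<r. (if i = 1 then a*v+b*u else 0) * g^i)
     + (\<Sum>i<r. (if i = 2 then u*v else 0) * g^i) + (\<Sum>i<r. (if i = l then a*B+b*A else 0) * g^i)
     + (\<Sum>i<r. (if i = l+1 then u*B+v*A else 0) * g^i) + (\<Sum>i<r. (if i = 2*l then A*B else 0) * g^i)"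
    unfolding CC_def distrib_right sum.distrib by simp
  also have "\<dots> = a*b*g^0 + (a*v+b*u)*g^1 + u*v*g^2 + (a*B+b*A)*g^l + (u*B+v*A)*g^(l+1) + A*B*g^(2*l)"
    using r assms(1) by (simp only: sum_delta_pow)
  also have "\<dots> = (a + u*g + A*g^l) * (b + v*g + B*g^l)"
  proof -
    have "g^(2*l) = g^l*g^l" "g^(l+1) = g^l*g" by (simp_all add: mult_2 power_add)
    then show ?thesis by (simp add: power2_eq_square algebra_simps)
  qed
  finally show ?thesis by simp
qed




context fq begin
lemma scaleF: assumes "t \<in> F" "t \<noteq> 0" shows "(\<lambda>z. (t*W)*z) ` F = (\<lambda>z. W*z) ` F"
proof
  show "(\<lambda>z. (t*W)*z) ` F \<subseteq> (\<lambda>z. W*z) ` F"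
  proof
    fix x assume "x \<in> (\<lambda>z. (t*W)*z) ` F"
    then obtain z where z: "z \<in> F" "x = (t*W)*z" by blast
    then have "x = W*(t*z)" by (simp add: algebra_simps)
    moreover have "t*z \<in> F" using mulF assms z by blast
    ultimately show "x \<in> (\<lambda>z. W*z) ` F" by blast
  qed
  show "(\<lambda>z. W*z) ` F \<subseteq> (\<lambda>z. (t*W)*z) ` F"
  proof
    fix x assume "x \<in> (\<lambda>z. W*z) ` F"
    then obtain z where z: "z \<in> F" "x = W*z" by blast
    then have "x = (t*W)*(z/t)" using assms(2) by (simp add: field_simps)
    moreover have "z/t \<in> F" using divF assms z by blast
    ultimately show "x \<in> (\<lambda>z. (t*W)*z) ` F" by blast
  qed
qed

lemma rel_sets: assumes "rel F X Y X' Y'"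
  shows "{(\<lambda>z. X*z) ` F, (\<lambda>z. Y*z) ` F} = {(\<lambda>z. X'*z) ` F, (\<lambda>z. Y'*z) ` F}"
proof -
  obtain t where t: "t\<in>F" "t\<noteq>0" "(X = t*X' \<and> Y' = t*Y) \<or> (X = t*Y' \<and> X' = t*Y)"
    using assms unfolding rel_def by blast
  show ?thesis
  proof (cases "X = t*X' \<and> Y' = t*Y")
    case True
    then show ?thesis using scaleF[OF t(1,2), of X'] scaleF[OF t(1,2), of Y] by simp
  next
    case False
    then have "X = t*Y' \<and> X' = t*Y" using t(3) by blast
    then show ?thesis using scaleF[OF t(1,2), of Y'] scaleF[OF t(1,2), of Y] by (simp add: insert_commute)
  qed
qed
end

context subf begin
lemma ifK: "X \<in> K \<Longrightarrow> (if P then X else 0) \<in> K" using z by simp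
lemma CC_K: "a\<in>K \<Longrightarrow> u\<in>K \<Longrightarrow> A\<in>K \<Longrightarrow> b\<in>K \<Longrightarrow> v\<in>K \<Longrightarrow> B\<in>K \<Longrightarrow> CC l a u A b v B i \<in> K"
  unfolding CC_def by (intro ad ifK ml; assumption)
end

lemma pow_iter: "(x::'a::comm_ring_1)^q = x \<Longrightarrow> x^(q^j) = x"
proof (induction j)
  case (Suc j)
  have "x^(q^Suc j) = (x^q)^(q^j)" by (simp add: power_mult)
  then show ?case using Suc by simp
qed simp




theorem lemma3p10:
  fixes q p m k r n :: nat and \<gamma> \<delta> :: "'a::{field,finite}" and l :: nat
  assumes "prime p" and "m \<ge> 1" and "q = p ^ m"
    and "k \<ge> 2" and "r > 4" and "n = r * k"
    and "CARD('a) = q ^ n"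
    and "\<exists>P. irreducible_over (subfield_of_order (q ^ k)) P \<and> degree P = r \<and> poly P \<gamma> = 0"
    and "\<delta> \<in> subfield_of_order (q ^ k)"
    and "2 \<le> l" and "int l \<le> (\<lceil>real r / 4\<rceil> - 1) + 1"
  shows "sidon_space (subfield_of_order q)
           {a + u * \<gamma> + (u ^ q + \<delta> * u) * \<gamma> ^ l | a u.
              a \<in> subfield_of_order q \<and> u \<in> subfield_of_order (q ^ k)}"
proof -
  define F where "F = (subfield_of_order q :: 'a set)"
  define K where "K = (subfield_of_order (q^k) :: 'a set)"
  define U where "U = {a + u * \<gamma> + (u ^ q + \<delta> * u) * \<gamma> ^ l | a u. a \<in> F \<and> u \<in> K}"
  have p2: "p \<ge> 2" using assms(1) by (simp add: prime_ge_2_nat)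
  have "p^1 \<le> p^m" using assms(2) p2 by (intro power_increasing) auto
  then have q2: "q \<ge> 2" using assms(3) p2 by simp
  have ch: "CHAR('a) = p"
    by (rule charp[OF assms(1), of "m*n"]) (simp add: assms(3,7) power_mult)
  have qj: "q^j = p^(m*j)" for j by (simp add: assms(3) power_mult)
  have frq: "(x+y)^(q^j) = x^(q^j) + y^(q^j)" for x y :: 'a and j
    by (rule frob[OF ch assms(1) qj])
  have frs: "(x-y)^(q^j) = x^(q^j) - y^(q^j)" for x y :: 'a and j
    by (rule frob_sub[OF ch assms(1) qj])
  have fr1: "(x+y)^q = x^q + y^q" for x y :: 'a using frq[of x y 1] by simp
  have frs1: "(x-y)^q = x^q - y^q" for x y :: 'a using frs[of x y 1] by simp
  interpret fq F q
  proof
    show "x \<in> F \<longleftrightarrow> x^q = x" for x by (simp add: F_def subfield_of_order_def)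
    show "q \<ge> 1" using q2 by simp
    show "x - y \<in> F" if "x \<in> F" "y \<in> F" for x y
      using that by (simp add: F_def subfield_of_order_def frs1)
  qed
  have qk0: "q^k > 0" using q2 by simp
  interpret subf K
  proof
    show "0 \<in> K" using qk0 by (simp add: K_def subfield_of_order_def)
    show "x + y \<in> K" if "x \<in> K" "y \<in> K" for x y
      using that by (simp add: K_def subfield_of_order_def frq)
    show "x - y \<in> K" if "x \<in> K" "y \<in> K" for x y
      using that by (simp add: K_def subfield_of_order_def frs)
    show "x * y \<in> K" if "x \<in> K" "y \<in> K" for x y
      using that by (simp add: K_def subfield_of_order_def power_mult_distrib)
    show "x / y \<in> K" if "x \<in> K" "y \<in> K" for x y
      using that by (simp add: K_def subfield_of_order_def power_divide)
  qed
  have FK: "x \<in> K" if "x \<in> F" for x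
    using that pow_iter[of x q k] by (simp add: F_def K_def subfield_of_order_def)
  have dK: "\<delta> \<in> K" using assms(9) by (simp add: K_def)
  have phiK: "u^q + \<delta>*u \<in> K" if "u \<in> K" for u
  proof -
    have "(u^q)^(q^k) = (u^(q^k))^q" by (simp flip: power_mult add: mult.commute)
    then have "u^q \<in> K" using that by (simp add: K_def subfield_of_order_def)
    then show ?thesis using ad ml dK that by blast
  qed
  have l2r: "2*l < r"
  proof -
    have "int l \<le> \<lceil>real r / 4\<rceil>" using assms(11) by simp
    then have "real l - 1 < real r / 4" by (simp add: le_ceiling_iff)
    then have "4 * l < r + 4" by linarith
    then show ?thesis using assms(5) by linarith
  qed
  obtain P where P: "irreducible_over K P" "degree P = r" "poly P \<gamma> = 0"
    using assms(8) by (auto simp: K_def)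
  have memU: "x \<in> U \<longleftrightarrow> (\<exists>a u. x = a + u * \<gamma> + (u ^ q + \<delta> * u) * \<gamma> ^ l \<and> a \<in> F \<and> u \<in> K)" for x
    by (simp add: U_def)
  have sub: "is_subspace_over F U"
    unfolding is_subspace_over_def
  proof (intro conjI ballI)
    show "0 \<in> U" unfolding memU using zeroF z by (intro exI[of _ 0]) (simp add: zero_pow)
  next
    fix x y assume "x \<in> U" "y \<in> U"
    then obtain a u b v where x: "x = a + u * \<gamma> + (u ^ q + \<delta> * u) * \<gamma> ^ l" "a \<in> F" "u \<in> K"
      and y: "y = b + v * \<gamma> + (v ^ q + \<delta> * v) * \<gamma> ^ l" "b \<in> F" "v \<in> K" unfolding memU by blast
    have "x + y = (a+b) + (u+v) * \<gamma> + ((u+v) ^ q + \<delta> * (u+v)) * \<gamma> ^ l"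
      unfolding x y fr1 by (simp add: algebra_simps)
    moreover have "a + b \<in> F" using x y by (simp add: F_def subfield_of_order_def fr1)
    moreover have "u + v \<in> K" using x y ad by blast
    ultimately show "x + y \<in> U" unfolding memU by blast
  next
    fix c x assume "c \<in> F" "x \<in> U"
    then obtain a u where x: "x = a + u * \<gamma> + (u ^ q + \<delta> * u) * \<gamma> ^ l" "a \<in> F" "u \<in> K"
      unfolding memU by blast
    have "c * x = (c*a) + (c*u) * \<gamma> + ((c*u) ^ q + \<delta> * (c*u)) * \<gamma> ^ l"
      unfolding x(1) W_scale[OF \<open>c \<in> F\<close>] ..
    moreover have "c*a \<in> F" using mulF \<open>c \<in> F\<close> x by blast
    moreover have "c*u \<in> K" using ml FK \<open>c \<in> F\<close> x by blast
    ultimately show "c * x \<in> U" unfolding memU by blast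
  qed
  have sid: "{(\<lambda>z. X*z) ` F, (\<lambda>z. Y*z) ` F} = {(\<lambda>z. X'*z) ` F, (\<lambda>z. Y'*z) ` F}"
    if XU: "X \<in> U" "Y \<in> U" "X' \<in> U" "Y' \<in> U" and nz: "X \<noteq> 0" "Y \<noteq> 0" "X' \<noteq> 0" "Y' \<noteq> 0"
      and eq: "X * Y = X' * Y'" for X Y X' Y'
  proof -
    obtain a u where x: "X = a + u * \<gamma> + (u ^ q + \<delta> * u) * \<gamma> ^ l" "a \<in> F" "u \<in> K"
      using XU(1) unfolding memU by blast
    obtain b v where y: "Y = b + v * \<gamma> + (v ^ q + \<delta> * v) * \<gamma> ^ l" "b \<in> F" "v \<in> K"
      using XU(2) unfolding memU by blast
    obtain a' u' where x': "X' = a' + u' * \<gamma> + (u' ^ q + \<delta> * u') * \<gamma> ^ l" "a' \<in> F" "u' \<in> K"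
      using XU(3) unfolding memU by blast
    obtain b' v' where y': "Y' = b' + v' * \<gamma> + (v' ^ q + \<delta> * v') * \<gamma> ^ l" "b' \<in> F" "v' \<in> K"
      using XU(4) unfolding memU by blast
    define A where "A = u ^ q + \<delta> * u"
    define B where "B = v ^ q + \<delta> * v"
    define A' where "A' = u' ^ q + \<delta> * u'"
    define B' where "B' = v' ^ q + \<delta> * v'"
    define C where "C = CC l a u A b v B"
    define C' where "C' = CC l a' u' A' b' v' B'"
    have XY: "X * Y = (\<Sum>i<r. C i * \<gamma>^i)"
      unfolding C_def x(1) y(1) A_def[symmetric] B_def[symmetric] by (rule expand[OF l2r assms(10)])
    have XY': "X' * Y' = (\<Sum>i<r. C' i * \<gamma>^i)"
      unfolding C'_def x'(1) y'(1) A'_def[symmetric] B'_def[symmetric] by (rule expand[OF l2r assms(10)])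
    have CK: "C i \<in> K" for i unfolding C_def
      by (rule CC_K) (use FK x y phiK in \<open>auto simp: A_def B_def\<close>)
    have CK': "C' i \<in> K" for i unfolding C'_def
      by (rule CC_K) (use FK x' y' phiK in \<open>auto simp: A'_def B'_def\<close>)
    have s0: "(\<Sum>i<r. (C i - C' i) * \<gamma>^i) = 0"
      using XY XY' eq by (simp add: left_diff_distrib sum_subtractf)
    have Ceq: "C j = C' j" if "j < r" for j
      using indep[OF P, of "\<lambda>i. C i - C' i", OF _ s0 that] sb CK CK' by simp
    have r: "0 < r" "1 < r" "2 < r" "l+1 < r" using l2r assms(10) by auto
    have E0: "a*b = a'*b'" using Ceq[OF r(1)] assms(10) by (simp add: C_def C'_def CC_def)
    have E1: "a*v+b*u = a'*v'+b'*u'" using Ceq[OF r(2)] assms(10) by (simp add: C_def C'_def CC_def)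
    have E2r: "u*v + (if l = 2 then a*B+b*A else 0) = u'*v' + (if l = 2 then a'*B'+b'*A' else 0)"
      using Ceq[OF r(3)] assms(10) by (simp add: C_def C'_def CC_def eq_commute[of 2 l])
    have E3r: "u*B+v*A = u'*B'+v'*A'"
      using Ceq[OF r(4)] assms(10) by (simp add: C_def C'_def CC_def)
    have "a*B+b*A = a'*B'+b'*A'"
    proof -
      have "a*B+b*A = (a*v+b*u)^q + \<delta>*(a*v+b*u)"
      proof -
        have "(a*v+b*u)^q = a*v^q + b*u^q" using x y Fpow by (simp add: fr1 power_mult_distrib)
        then show ?thesis by (simp add: A_def B_def algebra_simps)
      qed
      also have "\<dots> = (a'*v'+b'*u')^q + \<delta>*(a'*v'+b'*u')" using E1 by simp
      also have "\<dots> = a'*B'+b'*A'"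
      proof -
        have "(a'*v'+b'*u')^q = a'*v'^q + b'*u'^q" using x' y' Fpow by (simp add: fr1 power_mult_distrib)
        then show ?thesis by (simp add: A'_def B'_def algebra_simps)
      qed
      finally show ?thesis .
    qed
    then have E2: "u*v = u'*v'" using E2r by (cases "l = 2") simp_all
    have "u*B+v*A = (u*v^q + u^q*v) + 2*\<delta>*(u*v)" by (simp add: A_def B_def algebra_simps)
    moreover have "u'*B'+v'*A' = (u'*v'^q + u'^q*v') + 2*\<delta>*(u'*v')" by (simp add: A'_def B'_def algebra_simps)
    ultimately have E3: "u*v^q + u^q*v = u'*v'^q + u'^q*v'" using E3r E2 by simp
    have "rel F X Y X' Y'"
      unfolding x(1) y(1) x'(1) y'(1)
      by (rule core[OF x(2) y(2) x'(2) y'(2) E0 E1 E2 E3]) (use nz x y x' y' in simp_all)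
    then show ?thesis by (rule rel_sets)
  qed
  have "sidon_space F U"
    unfolding sidon_space_def
  proof (intro conjI sub ballI impI)
    fix X Y X' Y' assume "X \<in> U" "Y \<in> U" "X' \<in> U" "Y' \<in> U" "X \<noteq> 0" "Y \<noteq> 0" "X' \<noteq> 0" "Y' \<noteq> 0" "X * Y = X' * Y'"
    then show "{(\<lambda>z. X*z) ` F, (\<lambda>z. Y*z) ` F} = {(\<lambda>z. X'*z) ` F, (\<lambda>z. Y'*z) ` F}" by (rule sid)
  qed
  then show ?thesis unfolding U_def F_def K_def .
qed



end
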